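(* Let $\Omega$ be either $\mathbb{C}$ with the Euclidean distance or $\mathbb{D}$ with the hyperbolic distance. For any line segment $I\subset\Omega$ and any locally doubling measure $\mu$ in $\Omega$, $\mu(I)=0$.
   Context: A positive measure $\mu$ on $\Omega$ is locally doubling if there is $C>1$ such that $\mu(B)\le C\mu(B')$ for every ball $B\subset\Omega$ (in the distance of $\Omega$) of radius smaller than $1$, where $B'$ is the ball with the same center and half the radius. *)

theory Defs
  imports "HOL-Analysis.Analysis"
begin

definition hyp_dist :: "complex \<Rightarrow> complex \<Rightarrow> real" where
  "hyp_dist z w = artanh (cmod (z - w) / cmod (1 - cnj w * z))"

definition omega_ball :: "(complex \<Rightarrow> complex \<Rightarrow> real) \<Rightarrow> complex set \<Rightarrow> complex \<Rightarrow> real \<Rightarrow> complex set" where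
  "omega_ball d \<Omega> z r = {w \<in> \<Omega>. d z w < r}"

definition locally_doubling :: "(complex \<Rightarrow> complex \<Rightarrow> real) \<Rightarrow> complex set \<Rightarrow> complex measure \<Rightarrow> bool" where
  "locally_doubling d \<Omega> \<mu> \<longleftrightarrow>
     (\<exists>C>1. \<forall>z\<in>\<Omega>. \<forall>r. 0 < r \<and> r < 1 \<longrightarrow>
        emeasure \<mu> (omega_ball d \<Omega> z r) \<le> ennreal C * emeasure \<mu> (omega_ball d \<Omega> z (r / 2)))"

end

theory Submission
  imports Defs
begin

lemma meas_iff:
  assumes "sets \<mu> = sets (restrict_space borel \<Omega>)" "open \<Omega>"
  shows "A \<in> sets \<mu> \<longleftrightarrow> A \<subseteq> \<Omega> \<and> A \<in> sets borel"
  using assms by (simp add: sets_restrict_space_iff)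

lemma doubling_iter:
  assumes "\<And>z r. z \<in> \<Omega> \<Longrightarrow> 0 < r \<Longrightarrow> r < 1 \<Longrightarrow>
        emeasure \<mu> (omega_ball d \<Omega> z r) \<le> ennreal C * emeasure \<mu> (omega_ball d \<Omega> z (r / 2))"
    and "C > 1" and "z \<in> \<Omega>" "0 < r" "r < 1"
  shows "emeasure \<mu> (omega_ball d \<Omega> z r) \<le> ennreal (C ^ m) * emeasure \<mu> (omega_ball d \<Omega> z (r / 2 ^ m))"
proof (induction m)
  case 0
  then show ?case by simp
next
  case (Suc m)
  have "r / 2 ^ m < 1" using assms(4,5)
    by (smt (verit, ccfv_SIG) divide_le_eq_1_pos le_divide_eq_1_pos one_le_power zero_less_power)
  moreover have "0 < r / 2 ^ m" using assms(4) by simp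
  ultimately have "emeasure \<mu> (omega_ball d \<Omega> z (r / 2 ^ m)) \<le> ennreal C * emeasure \<mu> (omega_ball d \<Omega> z (r / 2 ^ m / 2))"
    using assms(1,3) by blast
  hence "ennreal (C ^ m) * emeasure \<mu> (omega_ball d \<Omega> z (r / 2 ^ m)) \<le> ennreal (C ^ m) * (ennreal C * emeasure \<mu> (omega_ball d \<Omega> z (r / 2 ^ m / 2)))"
    by (rule mult_left_mono) simp
  also have "\<dots> = ennreal (C ^ Suc m) * emeasure \<mu> (omega_ball d \<Omega> z (r / 2 ^ Suc m))"
  proof -
    have e1: "ennreal (C ^ Suc m) = ennreal (C ^ m) * ennreal C"
      using assms(2) by (simp add: ennreal_mult[symmetric] mult.commute)
    have e2: "r / 2 ^ m / 2 = r / 2 ^ Suc m" by simp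
    show ?thesis unfolding e1 e2 by (simp add: mult.assoc)
  qed
  finally show ?case using Suc by (rule order_trans[rotated])
qed

lemma pseudo_lt1:
  fixes y w :: complex
  assumes "cmod y < 1" "cmod w < 1"
  shows "cmod (y - w) < cmod (1 - cnj w * y)"
proof -
  obtain y1 y2 where y: "y = Complex y1 y2" by (cases y)
  obtain w1 w2 where w: "w = Complex w1 w2" by (cases w)
  have h1: "y1^2 + y2^2 < 1" using assms(1) y by (metis cmod_power2 complex.sel(1) complex.sel(2) norm_ge_zero power_strict_mono one_power2 zero_less_numeral)
  have h2: "w1^2 + w2^2 < 1" using assms(2) w by (metis cmod_power2 complex.sel(1) complex.sel(2) norm_ge_zero power_strict_mono one_power2 zero_less_numeral)
  have "(cmod (1 - cnj w * y))^2 - (cmod (y - w))^2 = (1 - (y1^2+y2^2)) * (1 - (w1^2+w2^2))"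
    unfolding cmod_power2 by (simp add: y w power2_eq_square algebra_simps)
  also have "\<dots> > 0" using h1 h2 by simp
  finally have "(cmod (y - w))^2 < (cmod (1 - cnj w * y))^2" by simp
  thus ?thesis by (simp add: power2_less_imp_less)
qed

lemma artanh_lower:
  fixes p :: real assumes "0 \<le> p" "p < 1" shows "p / 2 \<le> artanh p"
proof -
  have pos: "(1 - p) / (1 + p) > 0" using assms by simp
  have "ln ((1 - p) / (1 + p)) \<le> (1 - p) / (1 + p) - 1" using pos by (rule ln_le_minus_one)
  moreover have "ln ((1 + p) / (1 - p)) = - ln ((1 - p) / (1 + p))"
    using assms by (simp add: ln_div)
  moreover have "(1 - p) / (1 + p) - 1 = - 2 * p / (1 + p)" using assms by (simp add: field_simps)
  moreover have "2 * p / (1 + p) \<ge> p" using assms mult_left_mono[of p 1 p] by (simp add: field_simps)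
  ultimately show ?thesis unfolding artanh_def by linarith
qed

lemma artanh_upper:
  fixes p :: real assumes "0 \<le> p" "p \<le> 1/2" shows "artanh p \<le> 2 * p"
proof -
  have pos: "(1 + p) / (1 - p) > 0" using assms by simp
  have "ln ((1 + p) / (1 - p)) \<le> (1 + p) / (1 - p) - 1" using pos by (rule ln_le_minus_one)
  moreover have "(1 + p) / (1 - p) - 1 = 2 * p / (1 - p)" using assms by (simp add: field_simps)
  moreover have "2 * p / (1 - p) \<le> 4 * p" using assms mult_left_mono[of "2*p" 1 p] by (simp add: field_simps)
  ultimately show ?thesis unfolding artanh_def by linarith
qed

lemma hyp_M2:
  assumes "cmod y < 1" "cmod w < 1"
  shows "cmod (y - w) \<le> 4 * hyp_dist y w"
proof -
  define q where "q = cmod (1 - cnj w * y)"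
  define p where "p = cmod (y - w) / q"
  have lt: "cmod (y - w) < q" using pseudo_lt1[OF assms] q_def by simp
  hence qpos: "q > 0" by (smt (verit) norm_ge_zero)
  have "q \<le> 1 + cmod (cnj w * y)" unfolding q_def using norm_triangle_ineq4[of 1 "cnj w * y"] by simp
  also have "cmod (cnj w * y) \<le> 1" using assms by (simp add: norm_mult mult_le_one less_imp_le)
  finally have q2: "q \<le> 2" by simp
  have p0: "0 \<le> p" "p < 1" using lt qpos by (auto simp: p_def)
  have "cmod (y - w) = p * q" using qpos by (simp add: p_def)
  also have "\<dots> \<le> p * 2" using q2 p0 by (simp add: mult_left_mono)
  also have "\<dots> \<le> 4 * artanh p" using artanh_lower[OF p0] by simp
  finally show ?thesis unfolding hyp_dist_def p_def q_def .
qed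

lemma hyp_M1:
  assumes "0 < \<rho>" "cmod y \<le> 1 - \<rho>" "cmod w < 1" "cmod (y - w) \<le> \<rho> / 2"
  shows "hyp_dist y w \<le> (4 / \<rho>) * cmod (y - w)"
proof -
  define q where "q = cmod (1 - cnj w * y)"
  define p where "p = cmod (y - w) / q"
  have "1 - cmod (cnj w * y) \<le> q" unfolding q_def using norm_triangle_ineq2[of 1 "cnj w * y"] by simp
  moreover have "cmod (cnj w * y) \<le> cmod y" using assms(3) by (simp add: norm_mult mult_left_le_one_le less_imp_le)
  ultimately have q1: "\<rho> \<le> q" using assms(2) by linarith
  have p0: "0 \<le> p" using q1 assms(1) by (simp add: p_def)
  have "p \<le> cmod (y - w) / \<rho>" unfolding p_def using q1 assms(1)
    by (simp add: frac_le)
  also have "\<dots> \<le> 1/2" using assms(1,4) by (simp add: field_simps)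
  finally have p1: "p \<le> 1/2" .
  have "artanh p \<le> 2 * p" by (rule artanh_upper[OF p0 p1])
  also have "\<dots> \<le> 2 * (cmod (y - w) / \<rho>)" using \<open>p \<le> cmod (y - w) / \<rho>\<close> by simp
  also have "\<dots> \<le> (4 / \<rho>) * cmod (y - w)" using assms(1) by (simp add: field_simps)
  finally show ?thesis unfolding hyp_dist_def p_def q_def .
qed

lemma hyp_ball_open:
  assumes "cmod y < 1"
  shows "open (omega_ball hyp_dist (ball 0 1) y r)"
proof -
  have cont: "continuous_on (ball 0 1) (hyp_dist y)"
    unfolding hyp_dist_def
  proof (rule continuous_on_compose2[OF continuous_on_artanh[of "{-1<..<1}"]])
    have nz: "cmod (1 - cnj w * y) \<noteq> 0" if w: "w \<in> ball 0 1" for w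
    proof -
      have "cmod (y - w) < cmod (1 - cnj w * y)" using pseudo_lt1[OF assms] w by simp
      thus ?thesis by (smt (verit) norm_ge_zero)
    qed
    show "continuous_on (ball 0 1) (\<lambda>w. cmod (y - w) / cmod (1 - cnj w * y))"
      by (intro continuous_intros) (use nz in auto)
    show "(\<lambda>w. cmod (y - w) / cmod (1 - cnj w * y)) ` ball 0 1 \<subseteq> {-1<..<1}"
    proof
      fix z assume "z \<in> (\<lambda>w. cmod (y - w) / cmod (1 - cnj w * y)) ` ball 0 1"
      then obtain w where w: "w \<in> ball 0 1" and z: "z = cmod (y - w) / cmod (1 - cnj w * y)" by blast
      have lt: "cmod (y - w) < cmod (1 - cnj w * y)" using pseudo_lt1[OF assms] w by simp
      show "z \<in> {-1<..<1}" unfolding z using lt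
        by (simp add: divide_less_eq)  (smt (verit) norm_ge_zero zero_le_divide_iff)
    qed
  qed simp
  have "open (hyp_dist y -` {..<r} \<inter> ball 0 1)"
    using cont by (simp add: continuous_on_open_vimage)
  moreover have "omega_ball hyp_dist (ball 0 1) y r = hyp_dist y -` {..<r} \<inter> ball 0 1"
    unfolding omega_ball_def by auto
  ultimately show ?thesis by simp
qed

lemma key_ineq:
  fixes \<Omega> :: "complex set" and d :: "complex \<Rightarrow> complex \<Rightarrow> real" and \<mu> :: "complex measure"
  assumes openO: "open \<Omega>"
   and sets_mu: "sets \<mu> = sets (restrict_space borel \<Omega>)"
   and sub: "cball 0 (R+\<rho>) \<subseteq> \<Omega>"
   and rho: "0<\<rho>"
   and M0: "\<And>y r. y \<in> \<Omega> \<Longrightarrow> omega_ball d \<Omega> y r \<in> sets \<mu>"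
   and M1: "\<And>y w. cmod y \<le> R+\<rho> \<Longrightarrow> w \<in> \<Omega> \<Longrightarrow> cmod (y-w) \<le> \<rho>/2 \<Longrightarrow> d y w \<le> (4/\<rho>) * cmod(y-w)"
   and M2: "\<And>y w. cmod y \<le> R+\<rho> \<Longrightarrow> w \<in> \<Omega> \<Longrightarrow> cmod (y-w) \<le> (4/\<rho>) * d y w"
   and dbl: "\<And>z r. z\<in>\<Omega> \<Longrightarrow> 0<r \<Longrightarrow> r<1 \<Longrightarrow> emeasure \<mu> (omega_ball d \<Omega> z r) \<le> ennreal C0 * emeasure \<mu> (omega_ball d \<Omega> z (r/2))"
   and C0: "C0 > 1"
   and m: "8 * (4/\<rho>)^2 \<le> (2::real)^m"
   and x: "cmod x \<le> R" and n: "cmod n = 1" and h: "0 < h" "h \<le> \<rho>/32"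
  shows "emeasure \<mu> (ball x h \<inter> \<Omega>) \<le> ennreal (C0^m) * emeasure \<mu> (ball (x + of_real (3*h) * n) (h/2) \<inter> \<Omega>)"
proof -
  define L where "L = 4/\<rho>"
  have Lpos: "L > 0" using rho by (simp add: L_def)
  define y where "y = x + of_real (3*h) * n"
  have yx: "cmod (y - x) = 3*h" using n h by (simp add: y_def norm_mult)
  have yR: "cmod y \<le> R + \<rho>" using norm_triangle_ineq[of x "of_real (3*h) * n"] x n h
    by (simp add: y_def norm_mult)
  hence yO: "y \<in> \<Omega>" using sub by auto
  define r1 where "r1 = 4 * L * h"
  have r1: "0 < r1" "r1 < 1" using Lpos h rho by (auto simp: r1_def L_def field_simps)
  have incl1: "ball x h \<inter> \<Omega> \<subseteq> omega_ball d \<Omega> y r1"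
  proof
    fix w assume w: "w \<in> ball x h \<inter> \<Omega>"
    have "cmod (y - w) \<le> cmod (y - x) + cmod (x - w)" using norm_triangle_ineq[of "y-x" "x-w"] by simp
    also have "\<dots> < 4 * h" using w yx by (simp add: dist_norm)
    finally have yw: "cmod (y - w) < 4 * h" .
    hence "cmod (y - w) \<le> \<rho>/2" using h by simp
    hence "d y w \<le> L * cmod (y - w)" using M1[OF yR] w by (simp add: L_def)
    also have "\<dots> < L * (4 * h)" using yw Lpos by simp
    finally show "w \<in> omega_ball d \<Omega> y r1" using w by (simp add: omega_ball_def r1_def)
  qed
  have incl2: "omega_ball d \<Omega> y (r1 / 2^m) \<subseteq> ball y (h/2) \<inter> \<Omega>"
  proof
    fix w assume w: "w \<in> omega_ball d \<Omega> y (r1 / 2^m)"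
    hence wO: "w \<in> \<Omega>" and dw: "d y w < r1 / 2^m" by (auto simp: omega_ball_def)
    have "cmod (y - w) \<le> L * d y w" using M2[OF yR wO] by (simp add: L_def)
    also have "\<dots> < L * (r1 / 2^m)" using dw Lpos by (intro mult_strict_left_mono)
    also have "\<dots> = (8 * L^2) * h / 2^m / 2" by (simp add: r1_def power2_eq_square)
    also have "\<dots> \<le> 2^m * h / 2^m / 2" using m h
      by (intro divide_right_mono mult_right_mono) (auto simp: L_def)
    also have "\<dots> = h/2" by simp
    finally have "cmod (y - w) < h / 2" .
    thus "w \<in> ball y (h/2) \<inter> \<Omega>" using wO by (simp add: dist_norm)
  qed
  have mb: "ball y (h/2) \<inter> \<Omega> \<in> sets \<mu>" using meas_iff[OF sets_mu openO] openO by (auto intro!: borel_open)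
  have "emeasure \<mu> (ball x h \<inter> \<Omega>) \<le> emeasure \<mu> (omega_ball d \<Omega> y r1)"
    by (rule emeasure_mono[OF incl1 M0[OF yO]])
  also have "\<dots> \<le> ennreal (C0^m) * emeasure \<mu> (omega_ball d \<Omega> y (r1 / 2^m))"
    by (rule doubling_iter[OF dbl C0 yO r1])
  also have "\<dots> \<le> ennreal (C0^m) * emeasure \<mu> (ball y (h/2) \<inter> \<Omega>)"
    by (intro mult_left_mono emeasure_mono[OF incl2 mb]) simp
  finally show ?thesis by (simp add: y_def)
qed

definition strip :: "complex \<Rightarrow> complex \<Rightarrow> real \<Rightarrow> real \<Rightarrow> complex set" where
  "strip a u Rr h = {w. cmod w \<le> Rr \<and> 5*h/2 < Im (cnj u * (w - a)) \<and> Im (cnj u * (w - a)) < 7*h/2}"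

lemma strip_borel: "strip a u Rr h \<in> sets borel"
  unfolding strip_def by measurable

lemma per_h:
  fixes \<Omega> :: "complex set" and \<mu> :: "complex measure"
  assumes openO: "open \<Omega>"
   and sets_mu: "sets \<mu> = sets (restrict_space borel \<Omega>)"
   and sub: "cball 0 (R+\<rho>) \<subseteq> \<Omega>"
   and rho: "0<\<rho>"
   and aR: "cmod a \<le> R" "cmod b \<le> R" and ab: "a \<noteq> b"
   and keyH: "\<And>x n h. cmod x \<le> R \<Longrightarrow> cmod n = 1 \<Longrightarrow> 0 < h \<Longrightarrow> h \<le> \<rho>/32 \<Longrightarrow>
      emeasure \<mu> (ball x h \<inter> \<Omega>) \<le> ennreal C * emeasure \<mu> (ball (x + of_real (3*h) * n) (h/2) \<inter> \<Omega>)"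
   and h: "0 < h" "h \<le> \<rho>/32"
  shows "emeasure \<mu> (closed_segment a b) \<le> ennreal C * emeasure \<mu> (strip a ((b-a) / of_real (cmod (b-a))) (R+\<rho>) h)"
proof -
  define l where "l = cmod (b - a)"
  have lpos: "l > 0" using ab by (simp add: l_def)
  define u where "u = (b-a) / of_real l"
  have u1: "cmod u = 1" using lpos by (simp add: u_def l_def norm_divide)
  have uu: "cnj u * u = 1"
    by (metis complex_norm_square mult.commute u1 of_real_1 power_one)
  have bau: "b - a = of_real l * u" using lpos by (simp add: u_def)
  define nn where "nn = \<i> * u"
  have nn1: "cmod nn = 1" using u1 by (simp add: nn_def norm_mult)
  define J where "J = {..nat \<lfloor>l/h\<rfloor>}"
  define x where "x j = a + of_real (real j * h) * u" for j :: nat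
  define y where "y j = x j + of_real (3*h) * nn" for j :: nat
  define B where "B j = ball (y j) (h/2) \<inter> \<Omega>" for j :: nat
  have SR: "closed_segment a b \<subseteq> cball 0 R"
    by (rule closed_segment_subset) (use aR in auto)
  have RR: "cball (0::complex) R \<subseteq> cball 0 (R+\<rho>)" using rho by (auto simp: subset_iff)
  have SO: "closed_segment a b \<subseteq> \<Omega>" using SR sub RR by blast
  have seg: "\<exists>t. 0 \<le> t \<and> t \<le> l \<and> w = a + of_real t * u" if "w \<in> closed_segment a b" for w
  proof -
    from that have "\<exists>s. 0 \<le> s \<and> s \<le> 1 \<and> w = (1 - s) *\<^sub>R a + s *\<^sub>R b"
      by (simp only: in_segment(1))
    then obtain s where s: "0 \<le> s" "s \<le> 1" "w = (1 - s) *\<^sub>R a + s *\<^sub>R b"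
      by (elim exE conjE)
    have "w = a + of_real s * (b - a)" using s(3) by (simp add: scaleR_conv_of_real algebra_simps)
    also have "\<dots> = a + of_real (s * l) * u" unfolding bau by simp
    finally have w: "w = a + of_real (s * l) * u" .
    have "0 \<le> s * l" using s(1) lpos by simp
    moreover have "s * l \<le> l" using s lpos by (simp add: mult_left_le_one_le)
    ultimately show ?thesis using w by blast
  qed
  have xS: "x j \<in> closed_segment a b" if "j \<in> J" for j
  proof -
    have j1: "j \<le> nat \<lfloor>l/h\<rfloor>" using that unfolding J_def by simp
    have fl0: "0 \<le> \<lfloor>l/h\<rfloor>" using h(1) lpos by simp
    have "real j \<le> real (nat \<lfloor>l/h\<rfloor>)" using j1 by simp
    also have "\<dots> = of_int \<lfloor>l/h\<rfloor>" by (rule of_nat_nat[OF fl0])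
    also have "\<dots> \<le> l / h" by (rule of_int_floor_le)
    finally have "real j \<le> l / h" .
    hence jl: "real j * h \<le> l" using h(1) by (simp add: le_divide_eq)
    define s where "s = real j * h / l"
    have s: "0 \<le> s" "s \<le> 1" using jl lpos h(1) by (auto simp: s_def)
    have "x j = a + of_real s * (b - a)"
      using lpos unfolding x_def s_def u_def by simp
    also have "\<dots> = (1 - s) *\<^sub>R a + s *\<^sub>R b"
      by (simp add: scaleR_conv_of_real algebra_simps)
    finally have xe: "x j = (1 - s) *\<^sub>R a + s *\<^sub>R b" .
    show ?thesis unfolding in_segment(1) by (rule exI[of _ s]) (use s xe in simp)
  qed
  have cover: "closed_segment a b \<subseteq> (\<Union>j\<in>J. ball (x j) h \<inter> \<Omega>)"
  proof
    fix w assume w: "w \<in> closed_segment a b"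
    then obtain t where t: "0 \<le> t" "t \<le> l" "w = a + of_real t * u" using seg by blast
    define j where "j = nat \<lfloor>t/h\<rfloor>"
    have jJ: "j \<in> J" unfolding J_def j_def using t h(1)
      by (simp add: nat_mono floor_mono divide_right_mono)
    have t0: "0 \<le> \<lfloor>t/h\<rfloor>" using t(1) h(1) by simp
    have rj: "real j = of_int \<lfloor>t/h\<rfloor>" unfolding j_def by (rule of_nat_nat[OF t0])
    have fl: "real j \<le> t / h" "t / h < real j + 1" unfolding rj by simp_all
    have f1: "real j * h \<le> t" using fl(1) h(1) by (simp add: le_divide_eq)
    have f2: "t < real j * h + h" using fl(2) h(1) by (simp add: divide_less_eq distrib_right)
    have e: "x j - w = of_real (real j * h - t) * u" unfolding x_def t(3) by (simp add: algebra_simps)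
    have "dist (x j) w = cmod (of_real (real j * h - t) * u)" unfolding dist_norm e ..
    also have "\<dots> = \<bar>real j * h - t\<bar>" unfolding norm_mult norm_of_real u1 by simp
    finally have "dist (x j) w < h" using f1 f2 by simp
    thus "w \<in> (\<Union>j\<in>J. ball (x j) h \<inter> \<Omega>)" using jJ w SO by auto
  qed
  have Jfin: "finite J" unfolding J_def by simp
  have xR: "cmod (x j) \<le> R" if "j \<in> J" for j using xS[OF that] SR by auto
  have mO: "A \<in> sets \<mu> \<longleftrightarrow> A \<subseteq> \<Omega> \<and> A \<in> sets borel" for A by (rule meas_iff[OF sets_mu openO])
  have mball: "ball c r \<inter> \<Omega> \<in> sets \<mu>" for c r using mO openO by (auto intro!: borel_open)
  have mS: "closed_segment a b \<in> sets \<mu>" using mO SO by (auto intro!: borel_closed)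
  define St where "St = strip a u (R+\<rho>) h"
  have mSt: "St \<in> sets \<mu>"
  proof -
    have "St \<subseteq> cball 0 (R+\<rho>)" by (auto simp: St_def strip_def)
    thus ?thesis using mO sub strip_borel[of a u "R+\<rho>" h] unfolding St_def by blast
  qed
  have disj: "disjoint_family_on B J"
    unfolding disjoint_family_on_def
  proof (intro ballI impI)
    fix j k assume jk: "j \<in> J" "k \<in> J" "j \<noteq> k"
    have "real j - real k \<ge> 1 \<or> real k - real j \<ge> 1" using jk(3) by linarith
    hence ge1: "\<bar>real j - real k\<bar> \<ge> 1" by linarith
    have e: "y j - y k = of_real ((real j - real k) * h) * u" unfolding y_def x_def by (simp add: algebra_simps)
    have "dist (y j) (y k) = cmod (of_real ((real j - real k) * h) * u)" unfolding dist_norm e ..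
    also have "\<dots> = \<bar>real j - real k\<bar> * h" unfolding norm_mult norm_of_real u1 using h(1) by (simp add: abs_mult)
    finally have "dist (y j) (y k) \<ge> h" using ge1 h(1) by (simp add: mult_le_cancel_right1)
    thus "B j \<inter> B k = {}" unfolding B_def
    proof (safe)
      fix w assume "w \<in> ball (y j) (h/2)" "w \<in> ball (y k) (h/2)"
      hence "dist (y j) (y k) < h" using dist_triangle[of "y j" "y k" w] by (simp add: dist_commute)
      moreover assume "dist (y j) (y k) \<ge> h"
      ultimately show "w \<in> {}" by simp
    qed
  qed
  have BSt: "(\<Union>j\<in>J. B j) \<subseteq> St"
  proof
    fix w assume "w \<in> (\<Union>j\<in>J. B j)"
    then obtain j where j: "j \<in> J" and w: "dist (y j) w < h/2" by (auto simp: B_def)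
    have yj: "cmod (y j) \<le> R + 3*h" using xR[OF j] norm_triangle_ineq[of "x j" "of_real (3*h) * nn"] nn1 h(1)
      by (simp add: y_def norm_mult)
    have "cmod w \<le> cmod (y j) + cmod (w - y j)" using norm_triangle_ineq[of "y j" "w - y j"] by simp
    also have "cmod (w - y j) < h/2" using w by (simp add: dist_norm norm_minus_commute)
    finally have w1: "cmod w \<le> R + \<rho>" using yj h by simp
    have ya: "cnj u * (y j - a) = of_real (real j * h) + \<i> * of_real (3*h)"
    proof -
      have "cnj u * (y j - a) = (of_real (real j * h) + \<i> * of_real (3*h)) * (cnj u * u)"
        unfolding y_def x_def nn_def by (simp add: algebra_simps)
      thus ?thesis using uu by simp
    qed
    have "cnj u * (w - a) = cnj u * (w - y j) + cnj u * (y j - a)" by (simp add: algebra_simps)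
    hence ph: "Im (cnj u * (w - a)) = Im (cnj u * (w - y j)) + 3*h" using ya by simp
    have "\<bar>Im (cnj u * (w - y j))\<bar> \<le> cmod (cnj u * (w - y j))" by (rule abs_Im_le_cmod)
    also have "\<dots> = cmod (w - y j)" using u1 by (simp add: norm_mult)
    also have "\<dots> < h/2" using w by (simp add: dist_norm norm_minus_commute)
    finally have "\<bar>Im (cnj u * (w - y j))\<bar> < h/2" .
    hence "5*h/2 < Im (cnj u * (w - a)) \<and> Im (cnj u * (w - a)) < 7*h/2" unfolding ph abs_less_iff by linarith
    thus "w \<in> St" using w1 unfolding St_def strip_def by blast
  qed
  have "emeasure \<mu> (closed_segment a b) \<le> emeasure \<mu> (\<Union>j\<in>J. ball (x j) h \<inter> \<Omega>)"
    by (rule emeasure_mono[OF cover]) (intro sets.finite_UN Jfin mball)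
  also have "\<dots> \<le> (\<Sum>j\<in>J. emeasure \<mu> (ball (x j) h \<inter> \<Omega>))"
    by (rule emeasure_subadditive_finite) (use Jfin mball in auto)
  also have "\<dots> \<le> (\<Sum>j\<in>J. ennreal C * emeasure \<mu> (B j))"
    by (rule sum_mono) (unfold B_def y_def, rule keyH[OF xR nn1 h], assumption)
  also have "\<dots> = ennreal C * (\<Sum>j\<in>J. emeasure \<mu> (B j))" by (simp add: sum_distrib_left)
  also have "(\<Sum>j\<in>J. emeasure \<mu> (B j)) = emeasure \<mu> (\<Union>j\<in>J. B j)"
    by (rule sum_emeasure[OF _ disj Jfin]) (use mball in \<open>auto simp: B_def\<close>)
  also have "emeasure \<mu> (\<Union>j\<in>J. B j) \<le> emeasure \<mu> St"
    by (rule emeasure_mono[OF BSt mSt])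
  finally show ?thesis unfolding St_def u_def l_def by (simp add: mult_left_mono)
qed

lemma strip_disj:
  assumes "0 < h" "h' \<le> h / 2"
  shows "strip a u Rr h \<inter> strip a u Rr h' = {}"
  using assms unfolding strip_def by auto

lemma finite_mult_bound_zero:
  fixes x c :: ennreal
  assumes "x < \<infinity>" "c < \<infinity>" "\<And>K::nat. of_nat K * x \<le> c"
  shows "x = 0"
proof (rule ccontr)
  assume nz: "x \<noteq> 0"
  obtain s where s: "x = ennreal s" "0 \<le> s" using assms(1) by (cases x) auto
  obtain t where t: "c = ennreal t" "0 \<le> t" using assms(2) by (cases c) auto
  have spos: "s > 0" using nz s by (auto simp: less_le)
  obtain K :: nat where K: "t / s < real K" using reals_Archimedean2 by blast
  have "t < real K * s" using K spos by (simp add: divide_less_eq)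
  moreover have "ennreal (real K * s) \<le> ennreal t"
    using assms(3)[of K] s t by (simp add: ennreal_mult' ennreal_of_nat_eq_real_of_nat)
  hence "real K * s \<le> t" using t(2) by (simp add: ennreal_le_iff)
  ultimately show False by simp
qed

lemma core:
  fixes \<Omega> :: "complex set" and d :: "complex \<Rightarrow> complex \<Rightarrow> real" and \<mu> :: "complex measure"
  assumes openO: "open \<Omega>"
   and sets_mu: "sets \<mu> = sets (restrict_space borel \<Omega>)"
   and sub: "cball 0 (R+\<rho>) \<subseteq> \<Omega>"
   and fin: "emeasure \<mu> (cball 0 (R+\<rho>)) < \<infinity>"
   and rho: "0<\<rho>"
   and M0: "\<And>y r. y \<in> \<Omega> \<Longrightarrow> omega_ball d \<Omega> y r \<in> sets \<mu>"
   and M1: "\<And>y w. cmod y \<le> R+\<rho> \<Longrightarrow> w \<in> \<Omega> \<Longrightarrow> cmod (y-w) \<le> \<rho>/2 \<Longrightarrow> d y w \<le> (4/\<rho>) * cmod(y-w)"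
   and M2: "\<And>y w. cmod y \<le> R+\<rho> \<Longrightarrow> w \<in> \<Omega> \<Longrightarrow> cmod (y-w) \<le> (4/\<rho>) * d y w"
   and dbl: "\<And>z r. z\<in>\<Omega> \<Longrightarrow> 0<r \<Longrightarrow> r<1 \<Longrightarrow> emeasure \<mu> (omega_ball d \<Omega> z r) \<le> ennreal C0 * emeasure \<mu> (omega_ball d \<Omega> z (r/2))"
   and C0: "C0 > 1"
   and aR: "cmod a \<le> R" "cmod b \<le> R" and ab: "a \<noteq> b"
  shows "emeasure \<mu> (closed_segment a b) = 0"
proof -
  obtain m where m': "8 * (4/\<rho>)^2 < (2::real)^m" using real_arch_pow[of 2 "8 * (4/\<rho>)^2"] by auto
  hence m: "8 * (4/\<rho>)^2 \<le> (2::real)^m" by simp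
  define C where "C = C0 ^ m"
  note keyH = key_ineq[OF openO sets_mu sub rho M0 M1 M2 dbl C0 m]
  define u where "u = (b-a) / of_real (cmod (b-a))"
  define T where "T = cball (0::complex) (R+\<rho>)"
  define hk where "hk k = \<rho> / 32 / 2^k" for k :: nat
  define St where "St k = strip a u (R+\<rho>) (hk k)" for k
  have hk: "0 < hk k" "hk k \<le> \<rho>/32" for k using rho by (auto simp: hk_def divide_le_eq)
  have per: "emeasure \<mu> (closed_segment a b) \<le> ennreal C * emeasure \<mu> (St k)" for k
    unfolding St_def u_def C_def
    by (rule per_h[OF openO sets_mu sub rho aR ab keyH hk])
  have mO: "A \<in> sets \<mu> \<longleftrightarrow> A \<subseteq> \<Omega> \<and> A \<in> sets borel" for A by (rule meas_iff[OF sets_mu openO])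
  have StT: "St k \<subseteq> T" for k by (auto simp: St_def strip_def T_def)
  have mSt: "St k \<in> sets \<mu>" for k using StT[of k] sub strip_borel mO unfolding T_def St_def by blast
  have mT: "T \<in> sets \<mu>" using mO sub unfolding T_def by auto
  have disj: "disjoint_family_on St {..<K}" for K
    unfolding disjoint_family_on_def
  proof (intro ballI impI)
    fix k k' :: nat assume "k \<noteq> k'"
    have *: "St i \<inter> St j = {}" if "i < j" for i j
    proof -
      have "(2::real)^(Suc i) \<le> 2^j" using that by (intro power_increasing) auto
      hence "hk j \<le> hk i / 2" unfolding hk_def using rho
        by (simp add: divide_le_eq field_simps)
      thus ?thesis unfolding St_def by (rule strip_disj[OF hk(1)])
    qed
    show "St k \<inter> St k' = {}"
      using *[of k k'] *[of k' k] \<open>k \<noteq> k'\<close> by (cases "k < k'") (auto simp: Int_commute)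
  qed
  have bound: "of_nat K * emeasure \<mu> (closed_segment a b) \<le> ennreal C * emeasure \<mu> T" for K
  proof -
    have "of_nat K * emeasure \<mu> (closed_segment a b) = (\<Sum>k<K. emeasure \<mu> (closed_segment a b))" by simp
    also have "\<dots> \<le> (\<Sum>k<K. ennreal C * emeasure \<mu> (St k))" by (rule sum_mono) (rule per)
    also have "\<dots> = ennreal C * (\<Sum>k<K. emeasure \<mu> (St k))" by (simp add: sum_distrib_left)
    also have "(\<Sum>k<K. emeasure \<mu> (St k)) = emeasure \<mu> (\<Union>k<K. St k)"
      by (rule sum_emeasure[OF _ disj]) (use mSt in auto)
    also have "emeasure \<mu> (\<Union>k<K. St k) \<le> emeasure \<mu> T"
      by (rule emeasure_mono[OF _ mT]) (use StT in auto)
    finally show ?thesis by (simp add: mult_left_mono)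
  qed
  have SR: "closed_segment a b \<subseteq> T"
  proof -
    have "closed_segment a b \<subseteq> cball 0 R" by (rule closed_segment_subset) (use aR in auto)
    moreover have "cball (0::complex) R \<subseteq> T" using rho by (auto simp: subset_iff T_def)
    ultimately show ?thesis by blast
  qed
  have finS: "emeasure \<mu> (closed_segment a b) < \<infinity>"
    using emeasure_mono[OF SR mT] fin unfolding T_def by (simp add: le_less_trans)
  have finCT: "ennreal C * emeasure \<mu> T < \<infinity>" using fin unfolding T_def by (simp add: ennreal_mult_less_top)
  show ?thesis by (rule finite_mult_bound_zero[OF finS finCT bound])
qed

lemma nondeg:
  fixes \<Omega> :: "complex set" and d :: "complex \<Rightarrow> complex \<Rightarrow> real"
    and \<mu> :: "complex measure" and a b :: complex
  assumes space: "(\<Omega> = UNIV \<and> d = dist) \<or> (\<Omega> = ball 0 1 \<and> d = hyp_dist)"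
    and sets_mu: "sets \<mu> = sets (restrict_space borel \<Omega>)"
    and loc_finite: "\<And>K. compact K \<Longrightarrow> K \<subseteq> \<Omega> \<Longrightarrow> emeasure \<mu> K < \<infinity>"
    and doubling: "locally_doubling d \<Omega> \<mu>"
    and ab: "a \<in> \<Omega>" "b \<in> \<Omega>" "a \<noteq> b"
  shows "emeasure \<mu> (closed_segment a b) = 0"
proof -
  obtain C0 where C0: "C0 > 1" and dbl: "\<And>z r. z\<in>\<Omega> \<Longrightarrow> 0<r \<Longrightarrow> r<1 \<Longrightarrow>
      emeasure \<mu> (omega_ball d \<Omega> z r) \<le> ennreal C0 * emeasure \<mu> (omega_ball d \<Omega> z (r/2))"
    using doubling unfolding locally_doubling_def by blast
  define R where "R = max (cmod a) (cmod b)"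
  have aR: "cmod a \<le> R" "cmod b \<le> R" by (auto simp: R_def)
  have openO: "open \<Omega>" using space by auto
  have mO: "A \<in> sets \<mu> \<longleftrightarrow> A \<subseteq> \<Omega> \<and> A \<in> sets borel" for A by (rule meas_iff[OF sets_mu openO])
  from space show ?thesis
  proof
    assume E: "\<Omega> = UNIV \<and> d = dist"
    hence O: "\<Omega> = UNIV" and D: "d = dist" by auto
    show ?thesis
    proof (rule core[OF openO sets_mu _ _ _ _ _ _ dbl C0 aR ab(3), where \<rho> = 1])
      show "cball 0 (R + 1) \<subseteq> \<Omega>" using O by simp
      show "emeasure \<mu> (cball 0 (R + 1)) < \<infinity>" using O by (intro loc_finite) auto
      show "(0::real) < 1" by simp
      show "omega_ball d \<Omega> y r \<in> sets \<mu>" for y r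
      proof -
        have "omega_ball d \<Omega> y r = ball y r" using O D by (auto simp: omega_ball_def)
        thus ?thesis using mO O by auto
      qed
      show "d y w \<le> 4 / 1 * cmod (y - w)" for y w using D by (simp add: dist_norm)
      show "cmod (y - w) \<le> 4 / 1 * d y w" for y w using D by (simp add: dist_norm)
    qed
  next
    assume H: "\<Omega> = ball 0 1 \<and> d = hyp_dist"
    hence O: "\<Omega> = ball 0 1" and D: "d = hyp_dist" by auto
    have R1: "R < 1" using ab O by (auto simp: R_def)
    define \<rho> where "\<rho> = (1 - R) / 2"
    have R0: "0 \<le> R" using aR(1) norm_ge_zero[of a] by linarith
    have rho: "0 < \<rho>" "\<rho> \<le> 1/2" using R1 R0 unfolding \<rho>_def by auto
    have Rr: "R + \<rho> = 1 - \<rho>" by (simp add: \<rho>_def field_simps)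
    have Rr1: "R + \<rho> < 1" using Rr rho by simp
    have sub: "cball 0 (R + \<rho>) \<subseteq> \<Omega>" using O Rr1 by (auto simp: subset_iff)
    show ?thesis
    proof (rule core[OF openO sets_mu sub _ rho(1) _ _ _ dbl C0 aR ab(3)])
      show "emeasure \<mu> (cball 0 (R + \<rho>)) < \<infinity>" using sub by (intro loc_finite) auto
      show "omega_ball d \<Omega> y r \<in> sets \<mu>" if "y \<in> \<Omega>" for y r
      proof -
        have "open (omega_ball d \<Omega> y r)" using hyp_ball_open[of y r] that O D by simp
        moreover have "omega_ball d \<Omega> y r \<subseteq> \<Omega>" by (auto simp: omega_ball_def)
        ultimately show ?thesis using mO by auto
      qed
      show "d y w \<le> 4 / \<rho> * cmod (y - w)" if "cmod y \<le> R + \<rho>" "w \<in> \<Omega>" "cmod (y - w) \<le> \<rho> / 2" for y w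
        using hyp_M1[OF rho(1), of y w] that O D Rr by simp
      show "cmod (y - w) \<le> 4 / \<rho> * d y w" if "cmod y \<le> R + \<rho>" "w \<in> \<Omega>" for y w
      proof -
        have h: "cmod (y - w) \<le> 4 * hyp_dist y w" using hyp_M2[of y w] that O Rr1 by simp
        hence "hyp_dist y w \<ge> 0" by (smt (verit) norm_ge_zero)
        moreover have "4 \<le> 4 / \<rho>" using rho by (simp add: field_simps)
        ultimately have "4 * hyp_dist y w \<le> 4 / \<rho> * hyp_dist y w" by (intro mult_right_mono)
        thus ?thesis using h D by simp
      qed
    qed
  qed
qed

theorem lemma2:
  fixes \<Omega> :: "complex set" and d :: "complex \<Rightarrow> complex \<Rightarrow> real"
    and \<mu> :: "complex measure" and a b :: complex
  assumes space: "(\<Omega> = UNIV \<and> d = dist) \<or> (\<Omega> = ball 0 1 \<and> d = hyp_dist)"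
    and sets_mu: "sets \<mu> = sets (restrict_space borel \<Omega>)"
    and loc_finite: "\<And>K. compact K \<Longrightarrow> K \<subseteq> \<Omega> \<Longrightarrow> emeasure \<mu> K < \<infinity>"
    and doubling: "locally_doubling d \<Omega> \<mu>"
    and ab: "a \<in> \<Omega>" "b \<in> \<Omega>"
  shows "emeasure \<mu> (closed_segment a b) = 0"
proof (cases "a = b")
  case False
  thus ?thesis using nondeg[OF space sets_mu loc_finite doubling ab] by simp
next
  case True
  have openO: "open \<Omega>" using space by auto
  obtain e where e: "e > 0" "ball a e \<subseteq> \<Omega>" using openO ab(1) openE by blast
  define b' where "b' = a + of_real (e/2)"
  have b'O: "b' \<in> \<Omega>" using e by (auto simp: b'_def dist_norm intro!: subsetD[OF e(2)])
  have ne: "a \<noteq> b'" using e by (simp add: b'_def)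
  have z: "emeasure \<mu> (closed_segment a b') = 0"
    by (rule nondeg[OF space sets_mu loc_finite doubling ab(1) b'O ne])
  have "closed_segment a b' \<in> sets \<mu>"
  proof -
    have "closed_segment a b' \<subseteq> \<Omega>" using ab(1) b'O space
      by (metis closed_segment_subset convex_UNIV convex_ball subset_UNIV)
    thus ?thesis using meas_iff[OF sets_mu openO] by (auto intro!: borel_closed)
  qed
  hence "emeasure \<mu> (closed_segment a b) \<le> emeasure \<mu> (closed_segment a b')"
    using True by (intro emeasure_mono) auto
  thus ?thesis using z by simp
qed

end
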